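(* Let $n\ge2$, $1\le m<n$, and write $n=qm+r$ with integers $q\ge1$ and $0<r\le m$. For each subset $I\subset\{1,\ldots,m\}$ with $|I|=r$, the polynomial $F_I$ on $\mathfrak q^*=\mathfrak{sl}_n\oplus m\mathbb C^n$ defined by $$F_I(A,v)=\det\bigl(v\,|\,Av\,|\,\cdots\,|\,A^{q-1}v\,|\,A^q v_I\bigr),\qquad A\in\mathfrak{sl}_n,\ v\in m\mathbb C^n,$$ is invariant under $\exp(V)$ (equivalently under the abelian ideal $V$ of $\mathfrak q$). Here $v$ is viewed as an $n\times m$ matrix, $v_I$ is the $n\times r$ submatrix of $v$ formed by the columns with indices in $I$, and the argument of $\det$ is the $n\times n$ matrix obtained by concatenating the indicated blocks.
   Context: $\mathfrak q=\mathfrak{sl}_n\ltimes V$ with $V=m(\mathbb C^n)^*$ ($m$ copies of the dual defining representation), an abelian ideal; $Q=\mathrm{SL}_n\ltimes\exp(V)$. Identify $\mathfrak{sl}_n\cong\mathfrak{sl}_n^*$ via the trace form, so $\mathfrak q^*=\mathfrak{sl}_n\oplus V^*$ with $V^*=m\mathbb C^n$. Each $F_I$ is clearly $\mathrm{SL}_n$-invariant. *)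

theory Defs
  imports Complex_Main "Jordan_Normal_Form.Determinant"
begin

text \<open>Matrices are Jordan_Normal_Form matrices over the complex numbers; indices are 0-based,
so the column index set {1,...,m} of the paper becomes {0..<m}.\<close>

definition mtrace :: "complex mat \<Rightarrow> complex" where
  "mtrace A = (\<Sum>i<dim_row A. A $$ (i, i))"

text \<open>sl_n as traceless n x n complex matrices (identified with its dual via the trace form).\<close>
definition sl :: "nat \<Rightarrow> complex mat set" where
  "sl n = {A \<in> carrier_mat n n. mtrace A = 0}"

text \<open>Coadjoint action of exp(x), x \<in> V = m (C^n)^* (an m x n matrix whose rows are covectors),
on q^* = sl_n \<oplus> m C^n, an element (A, v) with v an n x m matrix.
With pairing <(A,v),(Y,xi)> = tr(A Y) + tr(xi v), and the bracket [x,Y] = x Y for x in V, Y in sl_n,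
one gets Ad^*(exp x)(A,v) = (A - v x + (tr(v x)/n) I, v).\<close>
definition coadj_exp_V :: "nat \<Rightarrow> complex mat \<Rightarrow> complex mat \<times> complex mat \<Rightarrow> complex mat \<times> complex mat" where
  "coadj_exp_V n x Av = (case Av of (A, v) \<Rightarrow>
     (A - v * x + (mtrace (v * x) / of_nat n) \<cdot>\<^sub>m 1\<^sub>m n, v))"

text \<open>F_I(A,v) = det(v | A v | ... | A^(q-1) v | A^q v_I); the columns of v_I are taken in increasing order.\<close>
definition F_I :: "nat \<Rightarrow> nat \<Rightarrow> nat \<Rightarrow> nat set \<Rightarrow> complex mat \<times> complex mat \<Rightarrow> complex" where
  "F_I n m q I Av = (case Av of (A, v) \<Rightarrow>
     det (mat n n (\<lambda>(i, j).
       if j < q * m then ((A ^\<^sub>m (j div m)) * v) $$ (i, j mod m)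
       else ((A ^\<^sub>m q) * v) $$ (i, sorted_list_of_set I ! (j - q * m)))))"

end

theory Submission
  imports Defs
begin

lemma mult_entry:
  assumes "A \<in> carrier_mat a b" "B \<in> carrier_mat b c" "i < a" "j < c"
  shows "(A * B) $$ (i,j) = (\<Sum>p<b. A $$ (i,p) * B $$ (p,j))"
  using assms by (auto simp: scalar_prod_def lessThan_atLeast0 intro!: sum.cong)

lemma pow_Suc_left:
  assumes "A \<in> carrier_mat n n"
  shows "A ^\<^sub>m Suc k = A * A ^\<^sub>m k"
proof (induction k)
  case 0 then show ?case using assms by simp
next
  case (Suc k)
  have "A ^\<^sub>m Suc (Suc k) = (A * A ^\<^sub>m k) * A" using Suc by simp
  also have "\<dots> = A * (A ^\<^sub>m k * A)" using assms by (simp add: assoc_mult_mat[of _ n n _ n _ n])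
  finally show ?case by simp
qed

lemma det_colop:
  fixes M M' :: "complex mat"
  assumes M: "M \<in> carrier_mat n n" and M': "M' \<in> carrier_mat n n"
    and h: "\<forall>j<n. \<exists>a. \<forall>r<n. M' $$ (r,j) = M $$ (r,j) + (\<Sum>i<j. a i * M $$ (r,i))"
  shows "det M' = det M"
proof -
  from h have "\<exists>a. \<forall>j<n. \<forall>r<n. M' $$ (r,j) = M $$ (r,j) + (\<Sum>i<j. a j i * M $$ (r,i))"
    by metis
  then obtain a where a: "\<And>j r. j<n \<Longrightarrow> r<n \<Longrightarrow> M' $$ (r,j) = M $$ (r,j) + (\<Sum>i<j. a j i * M $$ (r,i))"
    by blast
  define U where "U = mat n n (\<lambda>(i,j). if i = j then 1 else if i < j then a j i else (0::complex))"
  have U: "U \<in> carrier_mat n n" unfolding U_def by simp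
  have ut: "upper_triangular U" unfolding U_def upper_triangular_def by auto
  have dU: "det U = 1"
    using det_upper_triangular[OF ut U] U unfolding prod_list_diag_prod
    by (simp add: U_def)
  have "M * U = M'"
  proof (rule eq_matI)
    fix r j assume r: "r < dim_row M'" and j: "j < dim_col M'"
    have rn: "r < n" and jn: "j < n" using r j M' by auto
    have "(M * U) $$ (r,j) = (\<Sum>p<n. M $$ (r,p) * U $$ (p,j))"
      by (rule mult_entry[OF M U rn jn])
    also have "\<dots> = (\<Sum>p<n. (if p = j then M $$ (r,j) else 0) + (if p < j then a j p * M $$ (r,p) else 0))"
      by (rule sum.cong) (auto simp: U_def jn)
    also have "\<dots> = M $$ (r,j) + (\<Sum>p<n. if p < j then a j p * M $$ (r,p) else 0)"
      by (simp add: sum.distrib jn)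
    also have "(\<Sum>p<n. if p < j then a j p * M $$ (r,p) else 0) = (\<Sum>p<j. a j p * M $$ (r,p))"
    proof -
      have "(\<Sum>p<n. if p < j then a j p * M $$ (r,p) else 0) = (\<Sum>p\<in>{..<n} \<inter> {p. p<j}. a j p * M $$ (r,p))"
        by (simp add: sum.inter_restrict)
      also have "{..<n} \<inter> {p. p<j} = {..<j}" using jn by auto
      finally show ?thesis .
    qed
    finally show "(M * U) $$ (r,j) = M' $$ (r,j)" using a[OF jn rn] by simp
  qed (use M M' U in auto)
  then have "det M' = det M * det U" using det_mult[OF M U] by simp
  then show ?thesis using dU by simp
qed

definition kf :: "complex mat \<Rightarrow> complex mat \<Rightarrow> nat \<Rightarrow> nat \<Rightarrow> nat \<Rightarrow> complex" where
  "kf A v m i r = (A ^\<^sub>m (i div m) * v) $$ (r, i mod m)"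

definition good :: "nat \<Rightarrow> nat \<Rightarrow> complex mat \<Rightarrow> complex mat \<Rightarrow> nat \<Rightarrow> (nat \<Rightarrow> nat \<Rightarrow> complex) \<Rightarrow> bool" where
  "good n m A v k W = (\<forall>s<m. \<exists>d. \<forall>r<n. W r s = (\<Sum>i<k*m. d i * kf A v m i r))"

lemma good_cong: "good n m A v k W \<Longrightarrow> (\<And>r s. r<n \<Longrightarrow> s<m \<Longrightarrow> W r s = W' r s) \<Longrightarrow> good n m A v k W'"
  unfolding good_def by metis

lemma good_mono:
  assumes "good n m A v k W" "k \<le> k'"
  shows "good n m A v k' W"
  unfolding good_def
proof (intro allI impI)
  fix s assume s: "s < m"
  then obtain d where d: "\<And>r. r<n \<Longrightarrow> W r s = (\<Sum>i<k*m. d i * kf A v m i r)"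
    using assms(1) unfolding good_def by blast
  define d' where "d' i = (if i < k*m then d i else 0)" for i
  have sub: "{..<k*m} \<subseteq> {..<k'*m}" using assms(2) by (auto intro: less_le_trans)
  have "\<forall>r<n. W r s = (\<Sum>i<k'*m. d' i * kf A v m i r)"
  proof (intro allI impI)
    fix r assume "r < n"
    have "(\<Sum>i<k'*m. d' i * kf A v m i r) = (\<Sum>i<k*m. d' i * kf A v m i r)"
      by (rule sum.mono_neutral_right[OF _ sub]) (auto simp: d'_def)
    also have "\<dots> = (\<Sum>i<k*m. d i * kf A v m i r)" by (simp add: d'_def)
    finally show "W r s = (\<Sum>i<k'*m. d' i * kf A v m i r)" using d[OF \<open>r<n\<close>] by simp
  qed
  then show "\<exists>d. \<forall>r<n. W r s = (\<Sum>i<k'*m. d i * kf A v m i r)" by blast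
qed

lemma good_zero: "good n m A v k (\<lambda>r s. 0)"
  unfolding good_def by (intro allI impI exI[of _ "\<lambda>_. 0"]) simp

lemma good_add:
  assumes "good n m A v k W1" "good n m A v k W2"
  shows "good n m A v k (\<lambda>r s. W1 r s + W2 r s)"
  unfolding good_def
proof (intro allI impI)
  fix s assume s: "s < m"
  obtain d1 where d1: "\<And>r. r<n \<Longrightarrow> W1 r s = (\<Sum>i<k*m. d1 i * kf A v m i r)"
    using assms(1) s unfolding good_def by blast
  obtain d2 where d2: "\<And>r. r<n \<Longrightarrow> W2 r s = (\<Sum>i<k*m. d2 i * kf A v m i r)"
    using assms(2) s unfolding good_def by blast
  show "\<exists>d. \<forall>r<n. W1 r s + W2 r s = (\<Sum>i<k*m. d i * kf A v m i r)"
    by (rule exI[of _ "\<lambda>i. d1 i + d2 i"]) (simp add: d1 d2 sum.distrib distrib_right)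
qed

lemma good_smult:
  assumes "good n m A v k W"
  shows "good n m A v k (\<lambda>r s. c * W r s)"
  unfolding good_def
proof (intro allI impI)
  fix s assume s: "s < m"
  obtain d where d: "\<And>r. r<n \<Longrightarrow> W r s = (\<Sum>i<k*m. d i * kf A v m i r)"
    using assms(1) s unfolding good_def by blast
  show "\<exists>d. \<forall>r<n. c * W r s = (\<Sum>i<k*m. d i * kf A v m i r)"
    by (rule exI[of _ "\<lambda>i. c * d i"]) (simp add: d sum_distrib_left mult.assoc)
qed

lemma good_sum:
  assumes "finite T" "\<And>t. t \<in> T \<Longrightarrow> good n m A v k (f t)"
  shows "good n m A v k (\<lambda>r s. \<Sum>t\<in>T. f t r s)"
  using assms
proof (induction T rule: finite_induct)
  case empty then show ?case using good_zero by simp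
next
  case (insert t T)
  have "good n m A v k (\<lambda>r s. f t r s + (\<Sum>t\<in>T. f t r s))"
    using insert by (intro good_add) auto
  then show ?case using insert by simp
qed

lemma good_basis:
  assumes "l < k" "t < m"
  shows "good n m A v k (\<lambda>r s. c s * (A ^\<^sub>m l * v) $$ (r,t))"
  unfolding good_def
proof (intro allI impI)
  fix s assume s: "s < m"
  have mem: "l*m+t \<in> {..<k*m}"
  proof -
    have "l*m + t < l*m + m" using assms by simp
    also have "\<dots> = Suc l * m" by simp
    also have "\<dots> \<le> k*m" using assms by (intro mult_right_mono) auto
    finally show ?thesis by simp
  qed
  have kf: "kf A v m (l*m+t) r = (A ^\<^sub>m l * v) $$ (r,t)" for r
    using assms unfolding kf_def by simp
  show "\<exists>d. \<forall>r<n. c s * (A ^\<^sub>m l * v) $$ (r,t) = (\<Sum>i<k*m. d i * kf A v m i r)"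
    by (rule exI[of _ "\<lambda>i. if i = l*m+t then c s else 0"])
       (use mem in \<open>simp add: kf if_distrib[of "\<lambda>x. x * _"] cong: if_cong\<close>)
qed

lemma good_basis_diag:
  assumes "l < k"
  shows "good n m A v k (\<lambda>r s. c * (A ^\<^sub>m l * v) $$ (r,s))"
  unfolding good_def
proof (intro allI impI)
  fix s assume s: "s < m"
  have "good n m A v k (\<lambda>r s'. (\<lambda>_. c) s' * (A ^\<^sub>m l * v) $$ (r,s))"
    by (rule good_basis[OF assms s])
  then show "\<exists>d. \<forall>r<n. c * (A ^\<^sub>m l * v) $$ (r,s) = (\<Sum>i<k*m. d i * kf A v m i r)"
    unfolding good_def using s by blast
qed

lemma kf_shift:
  assumes A: "A \<in> carrier_mat n n" and v: "v \<in> carrier_mat n m" and m: "0 < m" and r: "r < n"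
  shows "(\<Sum>p<n. A $$ (r,p) * kf A v m i p) = kf A v m (i+m) r"
proof -
  have im: "i mod m < m" using m by simp
  have "kf A v m (i+m) r = (A ^\<^sub>m Suc (i div m) * v) $$ (r, i mod m)"
    unfolding kf_def using m by simp
  also have "\<dots> = (A * (A ^\<^sub>m (i div m) * v)) $$ (r, i mod m)"
    unfolding pow_Suc_left[OF A] using A v by (subst assoc_mult_mat[of _ n n _ n _ m]) auto
  also have "\<dots> = (\<Sum>p<n. A $$ (r,p) * (A ^\<^sub>m (i div m) * v) $$ (p, i mod m))"
    by (rule mult_entry[OF A _ r im]) (use A v in auto)
  finally show ?thesis unfolding kf_def by simp
qed

lemma good_shift:
  assumes A: "A \<in> carrier_mat n n" and v: "v \<in> carrier_mat n m" and m: "0 < m"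
    and g: "good n m A v k W"
  shows "good n m A v (Suc k) (\<lambda>r s. \<Sum>p<n. A $$ (r,p) * W p s)"
  unfolding good_def
proof (intro allI impI)
  fix s assume s: "s < m"
  obtain d where d: "\<And>r. r<n \<Longrightarrow> W r s = (\<Sum>i<k*m. d i * kf A v m i r)"
    using g s unfolding good_def by blast
  define d' where "d' i = (if i < m then 0 else d (i - m))" for i
  have "\<forall>r<n. (\<Sum>p<n. A $$ (r,p) * W p s) = (\<Sum>i<Suc k*m. d' i * kf A v m i r)"
  proof (intro allI impI)
    fix r assume r: "r < n"
    have "(\<Sum>p<n. A $$ (r,p) * W p s) = (\<Sum>p<n. \<Sum>i<k*m. A $$ (r,p) * (d i * kf A v m i p))"
      by (simp add: d sum_distrib_left)
    also have "\<dots> = (\<Sum>i<k*m. d i * (\<Sum>p<n. A $$ (r,p) * kf A v m i p))"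
      by (subst sum.swap) (simp add: sum_distrib_left mult.left_commute)
    also have "\<dots> = (\<Sum>i<k*m. d i * kf A v m (i+m) r)"
      by (simp add: kf_shift[OF A v m r])
    also have "\<dots> = (\<Sum>i\<in>{m..<k*m+m}. d' i * kf A v m i r)"
      using sum.shift_bounds_nat_ivl[of "\<lambda>i. d' i * kf A v m i r" 0 m "k*m"]
      by (simp add: d'_def lessThan_atLeast0)
    also have "\<dots> = (\<Sum>i\<in>{0..<m}. d' i * kf A v m i r) + (\<Sum>i\<in>{m..<k*m+m}. d' i * kf A v m i r)"
      by (simp add: d'_def)
    also have "\<dots> = (\<Sum>i<Suc k*m. d' i * kf A v m i r)"
      by (subst sum.atLeastLessThan_concat) (auto simp: lessThan_atLeast0 add.commute)
    finally show "(\<Sum>p<n. A $$ (r,p) * W p s) = (\<Sum>i<Suc k*m. d' i * kf A v m i r)" .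
  qed
  then show "\<exists>d. \<forall>r<n. (\<Sum>p<n. A $$ (r,p) * W p s) = (\<Sum>i<Suc k*m. d i * kf A v m i r)" by blast
qed

lemma main_good:
  assumes A: "A \<in> carrier_mat n n" and v: "v \<in> carrier_mat n m" and x: "x \<in> carrier_mat m n"
    and m: "0 < m" and A': "A' = A - v * x + c \<cdot>\<^sub>m 1\<^sub>m n"
  shows "good n m A v k (\<lambda>r s. (A' ^\<^sub>m k * v) $$ (r,s) - (A ^\<^sub>m k * v) $$ (r,s))"
proof (induction k)
  case 0
  have "dim_row A' = n" "dim_row A = n" using A v x A' by auto
  then show ?case by (simp add: good_zero)
next
  case (Suc k)
  have A'c: "A' \<in> carrier_mat n n" using A v x A' by auto
  define Y where "Y = A' ^\<^sub>m k * v"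
  define Z where "Z = A ^\<^sub>m k * v"
  have Yc: "Y \<in> carrier_mat n m" unfolding Y_def using A'c v by auto
  have Zc: "Z \<in> carrier_mat n m" unfolding Z_def using A v by auto
  define e where "e t s = (\<Sum>p<n. x $$ (t,p) * Y $$ (p,s))" for t s
  have eq: "(A' ^\<^sub>m Suc k * v) $$ (r,s) - (A ^\<^sub>m Suc k * v) $$ (r,s) =
     (\<Sum>p<n. A $$ (r,p) * (Y $$ (p,s) - Z $$ (p,s)))
     + (\<Sum>t<m. (- e t s) * (A ^\<^sub>m 0 * v) $$ (r,t))
     + c * (Y $$ (r,s) - Z $$ (r,s)) + c * Z $$ (r,s)"
    if r: "r < n" and s: "s < m" for r s
  proof -
    have Y1: "(A' ^\<^sub>m Suc k * v) $$ (r,s) = (\<Sum>p<n. A' $$ (r,p) * Y $$ (p,s))"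
    proof -
      have "A' ^\<^sub>m Suc k * v = A' * Y"
        unfolding pow_Suc_left[OF A'c] Y_def using A'c v by (subst assoc_mult_mat[of _ n n _ n _ m]) auto
      then show ?thesis using mult_entry[OF A'c Yc r s] by simp
    qed
    have Z1: "(A ^\<^sub>m Suc k * v) $$ (r,s) = (\<Sum>p<n. A $$ (r,p) * Z $$ (p,s))"
    proof -
      have "A ^\<^sub>m Suc k * v = A * Z"
        unfolding pow_Suc_left[OF A] Z_def using A v by (subst assoc_mult_mat[of _ n n _ n _ m]) auto
      then show ?thesis using mult_entry[OF A Zc r s] by simp
    qed
    have A'e: "A' $$ (r,p) = A $$ (r,p) - (\<Sum>t<m. v $$ (r,t) * x $$ (t,p)) + (if r = p then c else 0)"
      if p: "p < n" for p
      using A v x r p unfolding A' by (simp add: mult_entry[OF v x r p])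
    have "(\<Sum>p<n. A' $$ (r,p) * Y $$ (p,s)) =
       (\<Sum>p<n. A $$ (r,p) * Y $$ (p,s)) - (\<Sum>p<n. (\<Sum>t<m. v $$ (r,t) * x $$ (t,p)) * Y $$ (p,s))
       + (\<Sum>p<n. (if r = p then c else 0) * Y $$ (p,s))"
    proof -
      have "(\<Sum>p<n. A' $$ (r,p) * Y $$ (p,s)) = (\<Sum>p<n. A $$ (r,p) * Y $$ (p,s) - (\<Sum>t<m. v $$ (r,t) * x $$ (t,p)) * Y $$ (p,s)
       + (if r = p then c else 0) * Y $$ (p,s))"
        by (rule sum.cong) (simp_all add: A'e algebra_simps)
      then show ?thesis by (simp add: sum.distrib sum_subtractf)
    qed
    also have "(\<Sum>p<n. (if r = p then c else 0) * Y $$ (p,s)) = c * Y $$ (r,s)"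
      using r by (simp add: if_distrib[of "\<lambda>z. z * _"] cong: if_cong)
    also have "(\<Sum>p<n. (\<Sum>t<m. v $$ (r,t) * x $$ (t,p)) * Y $$ (p,s)) = (\<Sum>t<m. v $$ (r,t) * e t s)"
      unfolding e_def by (simp add: sum_distrib_left sum_distrib_right mult.assoc) (rule sum.swap)
    also have "(\<Sum>t<m. v $$ (r,t) * e t s) = - (\<Sum>t<m. (- e t s) * (A ^\<^sub>m 0 * v) $$ (r,t))"
      using A v r by (simp add: sum_negf mult.commute cong: sum.cong)
    finally show ?thesis unfolding Y1 Z1 by (simp add: algebra_simps sum_subtractf sum.distrib)
  qed
  have g1: "good n m A v (Suc k) (\<lambda>r s. \<Sum>p<n. A $$ (r,p) * (Y $$ (p,s) - Z $$ (p,s)))"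
    using good_shift[OF A v m Suc.IH] unfolding Y_def Z_def .
  have g2: "good n m A v (Suc k) (\<lambda>r s. \<Sum>t<m. (- e t s) * (A ^\<^sub>m 0 * v) $$ (r,t))"
  proof (rule good_sum)
    fix t assume "t \<in> {..<m}"
    then show "good n m A v (Suc k) (\<lambda>r s. (- e t s) * (A ^\<^sub>m 0 * v) $$ (r,t))"
      using good_basis[of 0 "Suc k" t m n A v "\<lambda>s. - e t s"] by simp
  qed simp
  have g3: "good n m A v (Suc k) (\<lambda>r s. c * (Y $$ (r,s) - Z $$ (r,s)))"
    by (rule good_mono[OF good_smult[OF Suc.IH[folded Y_def Z_def]]]) simp
  have g4: "good n m A v (Suc k) (\<lambda>r s. c * Z $$ (r,s))"
    unfolding Z_def by (rule good_basis_diag) simp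
  show ?case
    by (rule good_cong[OF good_add[OF good_add[OF good_add[OF g1 g2] g3] g4]]) (rule eq[symmetric])
qed

lemma col_ok:
  fixes M M' :: "complex mat"
  assumes g: "good n m A v b D" and s: "s < m" and bj: "b*m \<le> j"
    and Mi: "\<And>i r. i < b*m \<Longrightarrow> r < n \<Longrightarrow> M $$ (r,i) = kf A v m i r"
    and Mj: "\<And>r. r < n \<Longrightarrow> M' $$ (r,j) = M $$ (r,j) + D r s"
  shows "\<exists>a. \<forall>r<n. M' $$ (r,j) = M $$ (r,j) + (\<Sum>i<j. a i * M $$ (r,i))"
proof -
  obtain d where d: "\<And>r. r<n \<Longrightarrow> D r s = (\<Sum>i<b*m. d i * kf A v m i r)"
    using g s unfolding good_def by blast
  define a where "a i = (if i < b*m then d i else 0)" for i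
  have sub: "{..<b*m} \<subseteq> {..<j}" using bj by auto
  have "\<forall>r<n. M' $$ (r,j) = M $$ (r,j) + (\<Sum>i<j. a i * M $$ (r,i))"
  proof (intro allI impI)
    fix r assume r: "r < n"
    have "(\<Sum>i<j. a i * M $$ (r,i)) = (\<Sum>i<b*m. a i * M $$ (r,i))"
      by (rule sum.mono_neutral_right[OF _ sub]) (auto simp: a_def)
    also have "\<dots> = (\<Sum>i<b*m. d i * kf A v m i r)"
      by (rule sum.cong) (simp_all add: a_def Mi r)
    finally show "M' $$ (r,j) = M $$ (r,j) + (\<Sum>i<j. a i * M $$ (r,i))"
      using Mj[OF r] d[OF r] by simp
  qed
  then show ?thesis by blast
qed

theorem lemma4p2:
  fixes n m q r :: nat and I :: "nat set"
  assumes "n \<ge> 2" and "1 \<le> m" and "m < n"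
    and "n = q * m + r" and "q \<ge> 1" and "0 < r" and "r \<le> m"
    and "I \<subseteq> {0..<m}" and "card I = r"
  shows "\<forall>A \<in> sl n. \<forall>v \<in> carrier_mat n m. \<forall>x \<in> carrier_mat m n.
           F_I n m q I (coadj_exp_V n x (A, v)) = F_I n m q I (A, v)"
proof (intro ballI)
  fix A v x :: "complex mat" assume Asl: "A \<in> sl n" and v: "v \<in> carrier_mat n m" and x: "x \<in> carrier_mat m n"
  have A: "A \<in> carrier_mat n n" using Asl unfolding sl_def by simp
  have m: "0 < m" using assms by simp
  define c where "c = mtrace (v * x) / of_nat n"
  define A' where "A' = A - v * x + c \<cdot>\<^sub>m 1\<^sub>m n"
  define L where "L = sorted_list_of_set I"
  have finI: "finite I" using assms(8) finite_subset by blast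
  have lenL: "length L = r" unfolding L_def using assms(9) by simp
  have setL: "set L = I" unfolding L_def using finI by simp
  define MM where "MM B = mat n n (\<lambda>(i, j).
       if j < q * m then ((B ^\<^sub>m (j div m)) * v) $$ (i, j mod m)
       else ((B ^\<^sub>m q) * v) $$ (i, L ! (j - q * m)))" for B
  have lhs: "F_I n m q I (coadj_exp_V n x (A, v)) = det (MM A')"
    unfolding F_I_def coadj_exp_V_def MM_def A'_def c_def L_def by simp
  have rhs: "F_I n m q I (A, v) = det (MM A)"
    unfolding F_I_def MM_def L_def by simp
  have "det (MM A') = det (MM A)"
  proof (rule det_colop[of _ n])
    show "MM A \<in> carrier_mat n n" "MM A' \<in> carrier_mat n n" unfolding MM_def by auto
    show "\<forall>j<n. \<exists>a. \<forall>r<n. MM A' $$ (r,j) = MM A $$ (r,j) + (\<Sum>i<j. a i * MM A $$ (r,i))"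
    proof (intro allI impI)
      fix j assume j: "j < n"
      define b where "b = (if j < q*m then j div m else q)"
      define s where "s = (if j < q*m then j mod m else L ! (j - q*m))"
      have bq: "b \<le> q" unfolding b_def using m by (auto simp: less_mult_imp_div_less less_imp_le)
      have bj: "b * m \<le> j" unfolding b_def by (auto simp: div_times_less_eq_dividend)
      have s: "s < m"
      proof (cases "j < q*m")
        case True then show ?thesis unfolding s_def using m by simp
      next
        case False
        then have "j - q*m < length L" using j lenL assms(4) by simp
        then have "L ! (j - q*m) \<in> I" using setL nth_mem by blast
        then show ?thesis unfolding s_def using False assms(8) by auto
      qed
      have ent: "MM B $$ (r,j) = (B ^\<^sub>m b * v) $$ (r,s)" if "r < n" for B r
        unfolding MM_def b_def s_def using that j by simp
      have Mi: "MM A $$ (r,i) = kf A v m i r" if "i < b*m" "r < n" for i r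
      proof -
        have "b * m \<le> q * m" using bq by simp
        then have "i < q*m" "i < n" using that j bj by linarith+
        then show ?thesis unfolding MM_def kf_def using that by simp
      qed
      show "\<exists>a. \<forall>r<n. MM A' $$ (r,j) = MM A $$ (r,j) + (\<Sum>i<j. a i * MM A $$ (r,i))"
        by (rule col_ok[OF main_good[OF A v x m A'_def, of b] s bj Mi]) (simp_all add: ent)
    qed
  qed
  then show "F_I n m q I (coadj_exp_V n x (A, v)) = F_I n m q I (A, v)" using lhs rhs by simp
qed

end
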